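(* Let $\omega\in\mathbb{F}_8$ be a root of $y^3+y+1$, let $m\in\mathbb{N}$, let $L,M,N$ be nonempty subsets of $[m]$, and let $D=\Delta_L+\omega\Delta_M+\omega^2\Delta_N\subseteq\mathbb{F}_8^m$, so that $D^{(2)}=\{(d_1,d_3,d_2): d_1\in\Delta_L,d_2\in\Delta_M,d_3\in\Delta_N\}\subseteq(\mathbb{F}_2^m)^3$. Let $s=|L|+|M|+|N|$. Then the binary code $C^{(2)}_{D^*}=\{c^{(2)}_{D^*}(\alpha,\beta,\gamma):\alpha,\beta,\gamma\in\mathbb{F}_2^m\}$, where $c^{(2)}_{D^*}(\alpha,\beta,\gamma)=((\alpha,\beta,\gamma)\cdot(d_1,d_3,d_2))_{(d_1,d_3,d_2)\in D^{(2)}\setminus\{0\}}$, is a $[2^s-1,\,s,\,2^{s-1}]$ linear $1$-weight code over $\mathbb{F}_2$, with exactly $1$ codeword of weight $0$ and $2^s-1$ codewords of weight $2^{s-1}$. In particular, it is a minimal code. Further, it is a Griesmer code and hence distance optimal. If $Z_i=|\{(\alpha,\beta,\gamma)\in(\mathbb{F}_2^m)^3: wt(c^{(2)}_{D^*}(\alpha,\beta,\gamma))=i\}|$, then $Z_0=2^{3m-s}$ and $Z_{2^{s-1}}=2^{3m-s}(2^s-1)$.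
   Context: $[m]=\{1,\dots,m\}$; $\Delta_L=\{w\in\mathbb{F}_2^m:\{i:w_i\ne0\}\subseteq L\}$; $A+\omega B+\omega^2C=\{a+\omega b+\omega^2c: a\in A,b\in B,c\in C\}$. The dot product on $(\mathbb{F}_2^m)^3=\mathbb{F}_2^{3m}$ is the standard one. (This code is the subfield code, with respect to the basis $\{1,\omega,\omega^2\}$, of the octanary code $C_{D^*}=\{(v\cdot d)_{d\in D\setminus\{0\}}:v\in\mathbb{F}_8^m\}$.) A code is $1$-weight if all nonzero codewords have the same Hamming weight; minimal if for every nonzero codeword $c$, each nonzero codeword $c'$ with $\mathrm{Supp}(c')\subseteq\mathrm{Supp}(c)$ is a scalar multiple of $c$; Griesmer if its parameters $[n,k,d]$ over $\mathbb{F}_q$ satisfy $\sum_{i=0}^{k-1}\lceil d/q^i\rceil=n$; distance optimal if no $[n,k,d+1]$ linear code exists. *)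

theory Defs
  imports Complex_Main "HOL-Library.Z2"
begin

definition words :: "'i set \<Rightarrow> ('i \<Rightarrow> bit) set" where
  "words I = {c. \<forall>i. i \<notin> I \<longrightarrow> c i = 0}"

definition zero_word :: "'i \<Rightarrow> bit" where
  "zero_word = (\<lambda>i. 0)"

definition supp :: "('i \<Rightarrow> bit) \<Rightarrow> 'i set" where
  "supp c = {i. c i \<noteq> 0}"

definition wt :: "('i \<Rightarrow> bit) \<Rightarrow> nat" where
  "wt c = card (supp c)"

definition scal :: "bit \<Rightarrow> ('i \<Rightarrow> bit) \<Rightarrow> ('i \<Rightarrow> bit)" where
  "scal a c = (\<lambda>i. a * c i)"

definition lin_code :: "'i set \<Rightarrow> ('i \<Rightarrow> bit) set \<Rightarrow> bool" where
  "lin_code I C \<longleftrightarrow> C \<subseteq> words I \<and> zero_word \<in> C \<and>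
     (\<forall>x\<in>C. \<forall>y\<in>C. (\<lambda>i. x i + y i) \<in> C) \<and> (\<forall>a. \<forall>x\<in>C. scal a x \<in> C)"

text \<open>F_2-linear combinations = sums of finite subsets.\<close>
definition bin_span :: "('i \<Rightarrow> bit) set \<Rightarrow> ('i \<Rightarrow> bit) set" where
  "bin_span B = {(\<lambda>i. \<Sum>b\<in>S. b i) | S. S \<subseteq> B \<and> finite S}"

definition bin_indep :: "('i \<Rightarrow> bit) set \<Rightarrow> bool" where
  "bin_indep B \<longleftrightarrow> (\<forall>S. S \<subseteq> B \<and> finite S \<and> S \<noteq> {} \<longrightarrow> (\<lambda>i. \<Sum>b\<in>S. b i) \<noteq> zero_word)"

definition has_dim :: "('i \<Rightarrow> bit) set \<Rightarrow> nat \<Rightarrow> bool" where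
  "has_dim C k \<longleftrightarrow> (\<exists>B. B \<subseteq> C \<and> finite B \<and> bin_indep B \<and> bin_span B = C \<and> card B = k)"

definition min_dist :: "('i \<Rightarrow> bit) set \<Rightarrow> nat" where
  "min_dist C = Min (wt ` (C - {zero_word}))"

definition is_nkd_code :: "'i set \<Rightarrow> ('i \<Rightarrow> bit) set \<Rightarrow> nat \<Rightarrow> nat \<Rightarrow> nat \<Rightarrow> bool" where
  "is_nkd_code I C n k d \<longleftrightarrow> finite I \<and> card I = n \<and> lin_code I C \<and> has_dim C k \<and>
     C - {zero_word} \<noteq> {} \<and> min_dist C = d"

definition one_weight :: "('i \<Rightarrow> bit) set \<Rightarrow> bool" where
  "one_weight C \<longleftrightarrow> (\<exists>w. \<forall>c\<in>C - {zero_word}. wt c = w)"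

definition minimal_code :: "('i \<Rightarrow> bit) set \<Rightarrow> bool" where
  "minimal_code C \<longleftrightarrow> (\<forall>c\<in>C - {zero_word}. \<forall>c'\<in>C - {zero_word}.
     supp c' \<subseteq> supp c \<longrightarrow> (\<exists>a. c' = scal a c))"

definition griesmer :: "nat \<Rightarrow> nat \<Rightarrow> nat \<Rightarrow> bool" where
  "griesmer n k d \<longleftrightarrow> (\<Sum>i<k. nat \<lceil>real d / 2 ^ i\<rceil>) = n"

definition distance_optimal :: "nat \<Rightarrow> nat \<Rightarrow> nat \<Rightarrow> bool" where
  "distance_optimal n k d \<longleftrightarrow> \<not> (\<exists>C :: (nat \<Rightarrow> bit) set. is_nkd_code {..<n} C n k (d + 1))"

text \<open>Vectors of F_2^m, as functions on [m] = {1..m} (zero elsewhere).\<close>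
definition vecs :: "nat \<Rightarrow> (nat \<Rightarrow> bit) set" where
  "vecs m = {v. \<forall>i. i \<notin> {1..m} \<longrightarrow> v i = 0}"

definition Delta :: "nat \<Rightarrow> nat set \<Rightarrow> (nat \<Rightarrow> bit) set" where
  "Delta m L = {w \<in> vecs m. {i. w i \<noteq> 0} \<subseteq> L}"

definition dotp :: "nat \<Rightarrow> (nat \<Rightarrow> bit) \<Rightarrow> (nat \<Rightarrow> bit) \<Rightarrow> bit" where
  "dotp m u v = (\<Sum>i\<in>{1..m}. u i * v i)"

type_synonym triple = "(nat \<Rightarrow> bit) \<times> (nat \<Rightarrow> bit) \<times> (nat \<Rightarrow> bit)"

definition D2 :: "nat \<Rightarrow> nat set \<Rightarrow> nat set \<Rightarrow> nat set \<Rightarrow> triple set" where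
  "D2 m L M N = {(d1, d3, d2) | d1 d2 d3. d1 \<in> Delta m L \<and> d2 \<in> Delta m M \<and> d3 \<in> Delta m N}"

definition D2star :: "nat \<Rightarrow> nat set \<Rightarrow> nat set \<Rightarrow> nat set \<Rightarrow> triple set" where
  "D2star m L M N = D2 m L M N - {(zero_word, zero_word, zero_word)}"

definition cw :: "nat \<Rightarrow> nat set \<Rightarrow> nat set \<Rightarrow> nat set \<Rightarrow>
    (nat \<Rightarrow> bit) \<Rightarrow> (nat \<Rightarrow> bit) \<Rightarrow> (nat \<Rightarrow> bit) \<Rightarrow> triple \<Rightarrow> bit" where
  "cw m L M N \<alpha> \<beta> \<gamma> = (\<lambda>(x, y, z).
     if (x, y, z) \<in> D2star m L M N then dotp m \<alpha> x + dotp m \<beta> y + dotp m \<gamma> z else 0)"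

definition code :: "nat \<Rightarrow> nat set \<Rightarrow> nat set \<Rightarrow> nat set \<Rightarrow> (triple \<Rightarrow> bit) set" where
  "code m L M N = {cw m L M N \<alpha> \<beta> \<gamma> | \<alpha> \<beta> \<gamma>. \<alpha> \<in> vecs m \<and> \<beta> \<in> vecs m \<and> \<gamma> \<in> vecs m}"

definition Zcount :: "nat \<Rightarrow> nat set \<Rightarrow> nat set \<Rightarrow> nat set \<Rightarrow> nat \<Rightarrow> nat" where
  "Zcount m L M N i = card {(\<alpha>, \<beta>, \<gamma>). \<alpha> \<in> vecs m \<and> \<beta> \<in> vecs m \<and> \<gamma> \<in> vecs m \<and>
     wt (cw m L M N \<alpha> \<beta> \<gamma>) = i}"

end

theory Submission
  imports Defs
begin


declare add_bit_eq_xor[simp del] mult_bit_eq_and[simp del]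
lemma bit_one_one[simp]: "(1::bit) + 1 = 0" by (simp add: one_add_one)

lemma bit_cases': "(a::bit) = 0 \<or> a = 1" by (cases a) simp_all
lemma bit_add_self[simp]: "(a::bit) + a = 0" by (cases a) simp_all
lemma bit_solve: "(x::bit) = y + z \<Longrightarrow> y = x + z"
  by (metis add.assoc bit_add_self add_0_right)

lemma invol_half:
  fixes f :: "'a \<Rightarrow> bit"
  assumes fin: "finite A" and cl: "\<And>a. a\<in>A \<Longrightarrow> \<tau> a \<in> A"
    and inv: "\<And>a. a\<in>A \<Longrightarrow> \<tau> (\<tau> a) = a" and fl: "\<And>a. a\<in>A \<Longrightarrow> f (\<tau> a) = f a + 1"
  shows "2 * card {a\<in>A. f a = 1} = card A"
proof -
  let ?P = "{a\<in>A. f a = 1}" let ?Q = "{a\<in>A. f a = 0}"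
  have img: "\<tau> ` ?P = ?Q"
  proof
    show "\<tau> ` ?P \<subseteq> ?Q" using cl fl by auto
    show "?Q \<subseteq> \<tau> ` ?P"
    proof
      fix a assume a: "a \<in> ?Q"
      then have "\<tau> a \<in> ?P" using cl fl by auto
      moreover have "a = \<tau> (\<tau> a)" using inv a by auto
      ultimately show "a \<in> \<tau> ` ?P" by blast
    qed
  qed
  have "inj_on \<tau> ?P" by (rule inj_onI) (metis (no_types, lifting) inv mem_Collect_eq)
  then have "card ?Q = card ?P" using img card_image by fastforce
  moreover have "A = ?P \<union> ?Q" using bit_cases' by auto
  moreover have "card (?P \<union> ?Q) = card ?P + card ?Q"
    by (rule card_Un_disjoint) (use fin in auto)
  ultimately show ?thesis by simp
qed

lemma col_bound:
  fixes B :: "('i \<Rightarrow> bit) set"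
  assumes fin: "finite B" and k: "card B = k" "1 \<le> k"
  shows "card {S\<in>Pow B. (\<Sum>b\<in>S. b i) \<noteq> 0} \<le> 2^(k-1)"
proof (cases "\<exists>b0\<in>B. b0 i = 1")
  case True
  then obtain b0 where b0: "b0 \<in> B" "b0 i = 1" by blast
  define \<tau> where "\<tau> S = (if b0 \<in> S then S - {b0} else insert b0 S)" for S
  have "2 * card {S\<in>Pow B. (\<Sum>b\<in>S. b i) = 1} = card (Pow B)"
  proof (rule invol_half)
    show "finite (Pow B)" using fin by simp
    show "\<tau> S \<in> Pow B" if "S \<in> Pow B" for S using that b0 by (auto simp: \<tau>_def)
    show "\<tau> (\<tau> S) = S" if "S \<in> Pow B" for S using that by (auto simp: \<tau>_def)
    show "(\<Sum>b\<in>\<tau> S. b i) = (\<Sum>b\<in>S. b i) + 1" if "S \<in> Pow B" for S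
    proof -
      have fS: "finite S" using that fin finite_subset by auto
      show ?thesis
      proof (cases "b0 \<in> S")
        case True
        have "(\<Sum>b\<in>S. b i) = b0 i + (\<Sum>b\<in>S - {b0}. b i)"
          by (rule sum.remove[OF fS True])
        then have "(\<Sum>b\<in>S. b i) = (\<Sum>b\<in>S - {b0}. b i) + 1" by (simp only: b0 add.commute)
        then have "(\<Sum>b\<in>S - {b0}. b i) = (\<Sum>b\<in>S. b i) + 1" by (rule bit_solve)
        then show ?thesis using True by (simp add: \<tau>_def)
      next
        case False
        then show ?thesis using fS b0 by (simp add: \<tau>_def add.commute)
      qed
    qed
  qed
  then have "2 * card {S\<in>Pow B. (\<Sum>b\<in>S. b i) \<noteq> 0} = 2 ^ k" using fin k by (simp add: card_Pow)
  then show ?thesis using k by (cases k) auto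
next
  case False
  then have "{S\<in>Pow B. (\<Sum>b\<in>S. b i) \<noteq> 0} = {}"
    by (auto intro!: sum.neutral)
  then show ?thesis by (metis card.empty le0)
qed

lemma no_better_code:
  assumes k1: "1 \<le> k"
  shows "\<not> is_nkd_code {..<(2^k-1::nat)} C (2^k-1) k (2^(k-1)+1)"
proof
  define n :: nat where "n = 2^k - 1"
  assume H: "is_nkd_code {..<(2^k-1::nat)} C (2^k-1) k (2^(k-1)+1)"
  then obtain B where B: "B \<subseteq> C" "finite B" "bin_indep B" "bin_span B = C" "card B = k"
    and lc: "lin_code {..<n} C" and md: "min_dist C = 2^(k-1)+1"
    unfolding is_nkd_code_def has_dim_def n_def by blast
  define v where "v S = (\<lambda>i. \<Sum>b\<in>S. b i)" for S :: "(nat \<Rightarrow> bit) set"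
  have Ceq: "C = v ` Pow B"
    using B(2,4) unfolding bin_span_def v_def by (auto intro: finite_subset)
  have vC: "v S \<in> C" if "S \<subseteq> B" for S using that Ceq by blast
  have vnz: "v S \<noteq> zero_word" if "S \<subseteq> B" "S \<noteq> {}" for S
    using B(2,3) that unfolding bin_indep_def v_def by (meson finite_subset)
  have finC: "finite C" using Ceq B(2) by simp
  have wt_ge: "2^(k-1)+1 \<le> wt (v S)" if "S \<subseteq> B" "S \<noteq> {}" for S
  proof -
    have "v S \<in> C - {zero_word}" using vC vnz that by blast
    then have "Min (wt ` (C - {zero_word})) \<le> wt (v S)" using finC by (intro Min_le) auto
    then show ?thesis using md unfolding min_dist_def by simp
  qed
  have wt_sum: "wt (v S) = (\<Sum>i<n. if v S i \<noteq> 0 then 1 else 0)" if "S \<subseteq> B" for S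
  proof -
    have "v S \<in> words {..<n}" using vC[OF that] lc unfolding lin_code_def by blast
    then have "supp (v S) = {i\<in>{..<n}. v S i \<noteq> 0}" unfolding words_def supp_def by auto
    then show ?thesis unfolding wt_def by (simp add: sum.If_cases Int_def)
  qed
  have col: "card {S\<in>Pow B. v S i \<noteq> 0} \<le> 2^(k-1)" for i
    unfolding v_def using col_bound[OF B(2) B(5) k1] .
  have cardP: "card (Pow B - {{}}) = 2^k - 1" using B(2,5) by (simp add: card_Pow)
  have "(2^k - 1) * (2^(k-1)+1) = (\<Sum>S\<in>Pow B - {{}}. (2^(k-1)+1::nat))" using cardP by simp
  also have "\<dots> \<le> (\<Sum>S\<in>Pow B - {{}}. wt (v S))" by (rule sum_mono) (use wt_ge in auto)
  also have "\<dots> \<le> (\<Sum>S\<in>Pow B. wt (v S))" by (rule sum_mono2) (use B(2) in auto)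
  also have "\<dots> = (\<Sum>S\<in>Pow B. \<Sum>i<n. if v S i \<noteq> 0 then 1 else 0)" using wt_sum by simp
  also have "\<dots> = (\<Sum>i<n. \<Sum>S\<in>Pow B. if v S i \<noteq> 0 then 1 else 0)" by (rule sum.swap)
  also have "\<dots> = (\<Sum>i<n. card {S\<in>Pow B. v S i \<noteq> 0})"
    using B(2) by (intro sum.cong refl) (simp only: card_eq_sum sum.inter_filter finite_Pow_iff)
  also have "\<dots> \<le> (\<Sum>i<n. 2^(k-1))" by (rule sum_mono) (rule col)
  also have "\<dots> = (2^k-1) * 2^(k-1)" by (simp add: n_def)
  finally have "(2^k - 1) * (2^(k-1)+1) \<le> (2^k-1) * (2^(k-1)::nat)" .
  moreover have "(2::nat) ^ 1 \<le> 2 ^ k" by (rule power_increasing[OF k1]) simp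
  then have "(1::nat) \<le> 2^k - 1" by simp
  ultimately show False by (simp add: distrib_left)
qed



lemma bit_add_self2[simp]: "(a::bit) + b + b = a" by (simp add: add.assoc)

lemma card_vanish:
  assumes fU: "finite U" and AU: "A \<subseteq> U"
  shows "card {v::nat\<Rightarrow>bit. (\<forall>i. i \<notin> U \<longrightarrow> v i = 0) \<and> (\<forall>i\<in>A. v i = 0)} = 2^(card U - card A)"
proof -
  define ind where "ind S = (\<lambda>i::nat. if i \<in> S then (1::bit) else 0)" for S
  have eq: "{v::nat\<Rightarrow>bit. (\<forall>i. i \<notin> U \<longrightarrow> v i = 0) \<and> (\<forall>i\<in>A. v i = 0)} = ind ` Pow (U - A)"
  proof
    show "{v::nat\<Rightarrow>bit. (\<forall>i. i \<notin> U \<longrightarrow> v i = 0) \<and> (\<forall>i\<in>A. v i = 0)} \<subseteq> ind ` Pow (U - A)"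
    proof
      fix v :: "nat \<Rightarrow> bit" assume v: "v \<in> {v. (\<forall>i. i \<notin> U \<longrightarrow> v i = 0) \<and> (\<forall>i\<in>A. v i = 0)}"
      have "v = ind {i. v i \<noteq> 0}" by (auto simp: ind_def fun_eq_iff)
      moreover have "{i. v i \<noteq> 0} \<in> Pow (U - A)" using v by auto
      ultimately show "v \<in> ind ` Pow (U - A)" by blast
    qed
    show "ind ` Pow (U - A) \<subseteq> {v::nat\<Rightarrow>bit. (\<forall>i. i \<notin> U \<longrightarrow> v i = 0) \<and> (\<forall>i\<in>A. v i = 0)}"
      by (auto simp: ind_def)
  qed
  have inj: "inj_on ind (Pow (U - A))"
  proof (rule inj_onI)
    fix S S' assume "ind S = ind S'"
    then have "\<forall>i. (i \<in> S) = (i \<in> S')" unfolding ind_def fun_eq_iff by (metis zero_neq_one)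
    then show "S = S'" by blast
  qed
  have "card (ind ` Pow (U - A)) = 2 ^ card (U - A)"
    using card_image[OF inj] fU by (simp add: card_Pow)
  also have "card (U - A) = card U - card A" using AU fU by (meson card_Diff_subset finite_subset)
  finally show ?thesis using eq by simp
qed

definition unitv :: "nat \<Rightarrow> nat \<Rightarrow> bit" where "unitv j = (\<lambda>i. if i = j then 1 else 0)"
definition comp :: "nat \<times> nat \<Rightarrow> triple \<Rightarrow> bit" where
  "comp k t = (if fst k = 0 then fst t (snd k) else if fst k = 1 then fst (snd t) (snd k) else snd (snd t) (snd k))"
definition ek :: "nat \<times> nat \<Rightarrow> triple" where
  "ek k = ((if fst k = 0 then unitv (snd k) else zero_word), (if fst k = 1 then unitv (snd k) else zero_word),
     (if fst k = 2 then unitv (snd k) else zero_word))"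
definition addt :: "triple \<Rightarrow> triple \<Rightarrow> triple" where
  "addt t u = ((\<lambda>i. fst t i + fst u i), (\<lambda>i. fst (snd t) i + fst (snd u) i), (\<lambda>i. snd (snd t) i + snd (snd u) i))"

lemma comp_addt: "comp k (addt t u) = comp k t + comp k u" by (simp add: comp_def addt_def)
lemma comp_ek: "fst k \<le> 2 \<Longrightarrow> fst k' \<le> 2 \<Longrightarrow> comp k' (ek k) = (if k' = k then 1 else 0)"
  by (cases k; cases k') (auto simp: comp_def ek_def unitv_def zero_word_def le_Suc_eq numeral_2_eq_2)
lemma addt_addt: "addt (addt t u) u = t" by (simp add: addt_def)
lemma comp_zero: "comp k (zero_word, zero_word, zero_word) = 0" by (simp add: comp_def zero_word_def)

lemma Delta_char: "Delta m A = {v. (\<forall>i. i \<notin> {1..m} \<longrightarrow> v i = 0) \<and> (\<forall>i\<in>{1..m}-A. v i = 0)}"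
  unfolding Delta_def vecs_def by blast

lemma card_Delta: "A \<subseteq> {1..m} \<Longrightarrow> card (Delta m A) = 2 ^ card A"
proof -
  assume A: "A \<subseteq> {1..m}"
  have cA: "card A \<le> m" using card_mono[OF finite_atLeastAtMost A] by simp
  have "card (Delta m A) = 2 ^ (card {1..m} - card ({1..m} - A))"
    unfolding Delta_char by (rule card_vanish) auto
  also have "card {1..m} - card ({1..m} - A) = card A"
    using A cA by (simp add: card_Diff_subset finite_subset)
  finally show ?thesis .
qed

lemma Delta_add: "v \<in> Delta m A \<Longrightarrow> w \<in> Delta m A \<Longrightarrow> (\<lambda>i. v i + w i) \<in> Delta m A"
  unfolding Delta_char by auto

lemma dot_lemma:
  assumes x: "x \<in> Delta m A" and A: "A \<subseteq> {1..m}"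
  shows "dotp m \<alpha> x = (\<Sum>j\<in>{j\<in>A. \<alpha> j \<noteq> 0}. x j)"
proof -
  have "dotp m \<alpha> x = (\<Sum>i\<in>{j\<in>A. \<alpha> j \<noteq> 0}. \<alpha> i * x i)"
    unfolding dotp_def
  proof (rule sum.mono_neutral_right)
    show "finite {1..m}" by simp
    show "{j\<in>A. \<alpha> j \<noteq> 0} \<subseteq> {1..m}" using A by auto
    show "\<forall>i\<in>{1..m} - {j\<in>A. \<alpha> j \<noteq> 0}. \<alpha> i * x i = 0"
      using x unfolding Delta_def by auto
  qed
  also have "\<dots> = (\<Sum>j\<in>{j\<in>A. \<alpha> j \<noteq> 0}. x j)" by (rule sum.cong) auto
  finally show ?thesis .
qed

lemma sum_comp:
  assumes "finite A0" "finite A1" "finite A2"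
  shows "(\<Sum>k\<in>Pair (0::nat) ` A0 \<union> Pair 1 ` A1 \<union> Pair 2 ` A2. comp k t)
     = sum (fst t) A0 + sum (fst (snd t)) A1 + sum (snd (snd t)) A2"
proof -
  have "(\<Sum>k\<in>Pair (0::nat) ` A0 \<union> Pair 1 ` A1 \<union> Pair 2 ` A2. comp k t)
     = (\<Sum>k\<in>Pair (0::nat) ` A0. comp k t) + (\<Sum>k\<in>Pair 1 ` A1. comp k t) + (\<Sum>k\<in>Pair 2 ` A2. comp k t)"
  proof -
    have d1: "(Pair (0::nat) ` A0 \<union> Pair 1 ` A1) \<inter> Pair 2 ` A2 = {}" by auto
    have d2: "Pair (0::nat) ` A0 \<inter> Pair 1 ` A1 = {}" by auto
    have "(\<Sum>k\<in>Pair (0::nat) ` A0 \<union> Pair 1 ` A1 \<union> Pair 2 ` A2. comp k t) =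
      (\<Sum>k\<in>Pair (0::nat) ` A0 \<union> Pair 1 ` A1. comp k t) + (\<Sum>k\<in>Pair 2 ` A2. comp k t)"
      by (rule sum.union_disjoint) (use assms d1 in auto)
    moreover have "(\<Sum>k\<in>Pair (0::nat) ` A0 \<union> Pair 1 ` A1. comp k t) =
      (\<Sum>k\<in>Pair (0::nat) ` A0. comp k t) + (\<Sum>k\<in>Pair 1 ` A1. comp k t)"
      by (rule sum.union_disjoint) (use assms d2 in auto)
    ultimately show ?thesis by simp
  qed
  also have "(\<Sum>k\<in>Pair (0::nat) ` A0. comp k t) = sum (fst t) A0"
    by (subst sum.reindex) (auto simp: inj_on_def comp_def)
  also have "(\<Sum>k\<in>Pair (1::nat) ` A1. comp k t) = sum (fst (snd t)) A1"
    by (subst sum.reindex) (auto simp: inj_on_def comp_def)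
  also have "(\<Sum>k\<in>Pair (2::nat) ` A2. comp k t) = sum (snd (snd t)) A2"
    by (subst sum.reindex) (auto simp: inj_on_def comp_def)
  finally show ?thesis .
qed



locale ctx =
  fixes m :: nat and L M N :: "nat set"
  assumes L: "L \<subseteq> {1..m}" and M: "M \<subseteq> {1..m}" and N: "N \<subseteq> {1..m}"
    and Lne: "L \<noteq> {}" and Mne: "M \<noteq> {}" and Nne: "N \<noteq> {}"
begin

definition J :: "(nat \<times> nat) set" where "J = Pair (0::nat) ` L \<union> Pair 1 ` N \<union> Pair 2 ` M"
definition sumv :: "(nat \<times> nat) set \<Rightarrow> triple \<Rightarrow> bit" where
  "sumv K t = (if t \<in> D2star m L M N then \<Sum>k\<in>K. comp k t else 0)"
definition Kof :: "(nat \<Rightarrow> bit) \<Rightarrow> (nat \<Rightarrow> bit) \<Rightarrow> (nat \<Rightarrow> bit) \<Rightarrow> (nat \<times> nat) set" where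
  "Kof \<alpha> \<beta> \<gamma> = Pair (0::nat) ` {j\<in>L. \<alpha> j \<noteq> 0} \<union> Pair 1 ` {j\<in>N. \<beta> j \<noteq> 0} \<union> Pair 2 ` {j\<in>M. \<gamma> j \<noteq> 0}"
definition ind :: "nat \<Rightarrow> (nat \<times> nat) set \<Rightarrow> nat \<Rightarrow> bit" where
  "ind c K = (\<lambda>i. if (c, i) \<in> K then 1 else 0)"

lemma finL: "finite L" and finM: "finite M" and finN: "finite N"
  using L M N by (meson finite_atLeastAtMost finite_subset)+

lemma finJ: "finite J" unfolding J_def using finL finM finN by simp

lemma J_fst: "k \<in> J \<Longrightarrow> fst k \<le> 2" unfolding J_def by auto

lemma J_snd: "k \<in> J \<Longrightarrow> snd k \<in> {1..m}" unfolding J_def using L M N by auto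

lemma card_J: "card J = card L + card M + card N"
proof -
  have d1: "(Pair (0::nat) ` L \<union> Pair 1 ` N) \<inter> Pair 2 ` M = {}" by auto
  have d2: "Pair (0::nat) ` L \<inter> Pair 1 ` N = {}" by auto
  have "card J = card (Pair (0::nat) ` L \<union> Pair 1 ` N) + card (Pair (2::nat) ` M)"
    unfolding J_def by (rule card_Un_disjoint) (use finL finM finN d1 in auto)
  also have "card (Pair (0::nat) ` L \<union> Pair 1 ` N) = card (Pair (0::nat) ` L) + card (Pair (1::nat) ` N)"
    by (rule card_Un_disjoint) (use finL finM finN d2 in auto)
  finally show ?thesis by (simp add: card_image inj_on_def)
qed

lemma D2_eq: "D2 m L M N = Delta m L \<times> Delta m N \<times> Delta m M"
  unfolding D2_def by auto

lemma card_D2: "card (D2 m L M N) = 2 ^ (card L + card M + card N)"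
  unfolding D2_eq using card_Delta[OF L] card_Delta[OF M] card_Delta[OF N]
  by (simp add: card_cartesian_product power_add)

lemma fin_D2: "finite (D2 m L M N)"
  by (rule card_ge_0_finite) (simp add: card_D2)

lemma zero_Delta: "zero_word \<in> Delta m A" unfolding Delta_def vecs_def zero_word_def by auto

lemma unit_Delta: "j \<in> A \<Longrightarrow> A \<subseteq> {1..m} \<Longrightarrow> unitv j \<in> Delta m A"
  unfolding Delta_def vecs_def unitv_def by auto

lemma ek_in: "k \<in> J \<Longrightarrow> ek k \<in> D2star m L M N"
proof -
  assume k: "k \<in> J"
  have "ek k \<in> D2 m L M N"
    using k L M N unfolding D2_eq J_def ek_def by (auto intro: zero_Delta unit_Delta[OF _ L] unit_Delta[OF _ M] unit_Delta[OF _ N])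
  moreover have "ek k \<noteq> (zero_word, zero_word, zero_word)"
    using J_fst[OF k] comp_ek[OF J_fst[OF k] J_fst[OF k]] comp_zero[of k] by force
  ultimately show ?thesis unfolding D2star_def by blast
qed

lemma addt_in: "t \<in> D2 m L M N \<Longrightarrow> u \<in> D2 m L M N \<Longrightarrow> addt t u \<in> D2 m L M N"
  unfolding D2_eq addt_def by (auto intro: Delta_add)

lemma sumv_ek: "K \<subseteq> J \<Longrightarrow> k0 \<in> J \<Longrightarrow> sumv K (ek k0) = (if k0 \<in> K then 1 else 0)"
proof -
  assume K: "K \<subseteq> J" and k0: "k0 \<in> J"
  have "sumv K (ek k0) = (\<Sum>k\<in>K. comp k (ek k0))" using ek_in[OF k0] by (simp add: sumv_def)
  also have "\<dots> = (\<Sum>k\<in>K. if k = k0 then 1 else 0)"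
  proof (rule sum.cong)
    fix k assume "k \<in> K"
    then show "comp k (ek k0) = (if k = k0 then 1 else 0)"
      using comp_ek[OF J_fst[OF k0] J_fst[of k]] K by auto
  qed simp
  also have "\<dots> = (if k0 \<in> K then 1 else 0)"
  proof -
    have "finite K" using K finJ finite_subset by auto
    then show ?thesis using sum.delta'[of K k0 "\<lambda>_. (1::bit)"] by (simp add: eq_commute)
  qed
  finally show ?thesis .
qed

lemma sumv_inj: "inj_on sumv (Pow J)"
proof (rule inj_onI)
  fix K K' assume K: "K \<in> Pow J" and K': "K' \<in> Pow J" and eq: "sumv K = sumv K'"
  show "K = K'"
  proof (rule ccontr)
    assume "K \<noteq> K'"
    then obtain k0 where "k0 \<in> K \<and> k0 \<notin> K' \<or> k0 \<in> K' \<and> k0 \<notin> K" by blast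
    moreover have "k0 \<in> J" if "k0 \<in> K \<or> k0 \<in> K'" using that K K' by blast
    ultimately show False using sumv_ek[of K k0] sumv_ek[of K' k0] K K' eq by auto
  qed
qed

lemma sumv_empty: "sumv {} = zero_word" unfolding sumv_def zero_word_def by auto

lemma Kof_J: "Kof \<alpha> \<beta> \<gamma> \<subseteq> J" unfolding Kof_def J_def by auto

lemma cw_eq: "cw m L M N \<alpha> \<beta> \<gamma> = sumv (Kof \<alpha> \<beta> \<gamma>)"
proof
  fix t :: triple
  obtain x y z where t: "t = (x, y, z)" by (cases t)
  show "cw m L M N \<alpha> \<beta> \<gamma> t = sumv (Kof \<alpha> \<beta> \<gamma>) t"
  proof (cases "t \<in> D2star m L M N")
    case True
    then have x: "x \<in> Delta m L" and y: "y \<in> Delta m N" and z: "z \<in> Delta m M"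
      unfolding D2star_def D2_eq t by auto
    have "cw m L M N \<alpha> \<beta> \<gamma> t = dotp m \<alpha> x + dotp m \<beta> y + dotp m \<gamma> z"
      using True unfolding cw_def t by simp
    also have "\<dots> = sum x {j\<in>L. \<alpha> j \<noteq> 0} + sum y {j\<in>N. \<beta> j \<noteq> 0} + sum z {j\<in>M. \<gamma> j \<noteq> 0}"
      using dot_lemma[OF x L] dot_lemma[OF y N] dot_lemma[OF z M] by simp
    also have "\<dots> = (\<Sum>k\<in>Kof \<alpha> \<beta> \<gamma>. comp k t)"
      unfolding Kof_def by (subst sum_comp) (use finL finM finN t in auto)
    finally show ?thesis using True by (simp add: sumv_def)
  next
    case False
    then show ?thesis unfolding cw_def sumv_def t by simp
  qed
qed

lemma Kof_ind: "K \<subseteq> J \<Longrightarrow> Kof (ind 0 K) (ind 1 K) (ind 2 K) = K"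
  unfolding Kof_def ind_def J_def by (auto simp: image_iff) 

lemma ind_vecs: "K \<subseteq> J \<Longrightarrow> ind c K \<in> vecs m"
  unfolding vecs_def ind_def using J_snd by fastforce

lemma code_eq: "code m L M N = sumv ` Pow J"
proof
  show "code m L M N \<subseteq> sumv ` Pow J"
    unfolding code_def using cw_eq Kof_J by blast
  show "sumv ` Pow J \<subseteq> code m L M N"
  proof
    fix c assume "c \<in> sumv ` Pow J"
    then obtain K where K: "K \<subseteq> J" and c: "c = sumv K" by blast
    have "c = cw m L M N (ind 0 K) (ind 1 K) (ind 2 K)" using c cw_eq Kof_ind[OF K] by simp
    then show "c \<in> code m L M N" unfolding code_def using ind_vecs[OF K] by blast
  qed
qed


abbreviation "sz \<equiv> card L + card M + card N"

lemma sz_pos: "1 \<le> sz"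
  using Lne finL by (simp add: Suc_leI card_gt_0_iff)

lemma wt_sumv: "K \<subseteq> J \<Longrightarrow> K \<noteq> {} \<Longrightarrow> wt (sumv K) = 2 ^ (sz - 1)"
proof -
  assume K: "K \<subseteq> J" and Kne: "K \<noteq> {}"
  then obtain k0 where k0K: "k0 \<in> K" by blast
  then have k0: "k0 \<in> J" using K by blast
  have finK: "finite K" using K finJ finite_subset by auto
  define f where "f t = (\<Sum>k\<in>K. comp k t)" for t
  have fz: "f (zero_word, zero_word, zero_word) = 0" unfolding f_def by (simp add: comp_zero)
  have supp: "supp (sumv K) = {t \<in> D2 m L M N. f t = 1}"
    unfolding supp_def sumv_def D2star_def f_def using fz[unfolded f_def] by auto
  have ekD: "ek k0 \<in> D2 m L M N" using ek_in[OF k0] unfolding D2star_def by blast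
  have "2 * card {t \<in> D2 m L M N. f t = 1} = card (D2 m L M N)"
  proof (rule invol_half[where \<tau>="\<lambda>t. addt t (ek k0)"])
    show "finite (D2 m L M N)" by (rule fin_D2)
    show "addt t (ek k0) \<in> D2 m L M N" if "t \<in> D2 m L M N" for t using addt_in[OF that ekD] .
    show "addt (addt t (ek k0)) (ek k0) = t" for t by (rule addt_addt)
    show "f (addt t (ek k0)) = f t + 1" for t
    proof -
      have "f (addt t (ek k0)) = f t + (\<Sum>k\<in>K. comp k (ek k0))"
        unfolding f_def comp_addt by (rule sum.distrib)
      also have "(\<Sum>k\<in>K. comp k (ek k0)) = sumv K (ek k0)" using ek_in[OF k0] by (simp add: sumv_def)
      also have "\<dots> = 1" using sumv_ek[OF K k0] k0K by simp
      finally show ?thesis .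
    qed
  qed
  then have "2 * wt (sumv K) = 2 ^ sz" unfolding wt_def supp card_D2 .
  then show ?thesis using sz_pos
    by (metis Suc_diff_le diff_Suc_1 mult_left_cancel power_Suc zero_neq_numeral)
qed

lemma wt_zero: "wt zero_word = 0" unfolding wt_def supp_def zero_word_def by simp

lemma code_cases: "c \<in> code m L M N \<Longrightarrow> c = zero_word \<or> wt c = 2 ^ (sz - 1)"
  unfolding code_eq using wt_sumv sumv_empty by blast

lemma pow_ne0: "(2::nat) ^ (sz - 1) \<noteq> 0" by simp

lemma code_nz: "c \<in> code m L M N \<Longrightarrow> c \<noteq> zero_word \<Longrightarrow> wt c = 2 ^ (sz - 1)"
  using code_cases by blast

lemma card_code: "card (code m L M N) = 2 ^ sz"
  unfolding code_eq using card_image[OF sumv_inj] finJ card_J by (simp add: card_Pow)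

lemma fin_code: "finite (code m L M N)" unfolding code_eq using finJ by simp

lemma zero_in_code: "zero_word \<in> code m L M N"
  unfolding code_eq using sumv_empty by (metis Pow_bottom image_eqI)

lemma code_words: "code m L M N \<subseteq> words (D2star m L M N)"
  unfolding code_eq words_def sumv_def by auto

lemma dotp_add: "dotp m (\<lambda>i. u i + u' i) x = dotp m u x + dotp m u' x"
  unfolding dotp_def by (simp add: distrib_right sum.distrib)

lemma cw_add: "(\<lambda>i. cw m L M N \<alpha> \<beta> \<gamma> i + cw m L M N \<alpha>' \<beta>' \<gamma>' i)
   = cw m L M N (\<lambda>i. \<alpha> i + \<alpha>' i) (\<lambda>i. \<beta> i + \<beta>' i) (\<lambda>i. \<gamma> i + \<gamma>' i)"
  unfolding cw_def dotp_add by (auto simp: ac_simps)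

lemma vecs_add: "u \<in> vecs m \<Longrightarrow> v \<in> vecs m \<Longrightarrow> (\<lambda>i. u i + v i) \<in> vecs m"
  unfolding vecs_def by auto

lemma lin: "lin_code (D2star m L M N) (code m L M N)"
  unfolding lin_code_def
proof (intro conjI ballI allI)
  show "code m L M N \<subseteq> words (D2star m L M N)" by (rule code_words)
  show "zero_word \<in> code m L M N" by (rule zero_in_code)
  show "(\<lambda>i. x i + y i) \<in> code m L M N" if xy: "x \<in> code m L M N" "y \<in> code m L M N" for x y
  proof -
    obtain \<alpha> \<beta> \<gamma> where x: "x = cw m L M N \<alpha> \<beta> \<gamma>" "\<alpha> \<in> vecs m" "\<beta> \<in> vecs m" "\<gamma> \<in> vecs m"
      using xy(1) unfolding code_def by blast
    obtain \<alpha>' \<beta>' \<gamma>' where y: "y = cw m L M N \<alpha>' \<beta>' \<gamma>'" "\<alpha>' \<in> vecs m" "\<beta>' \<in> vecs m" "\<gamma>' \<in> vecs m"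
      using xy(2) unfolding code_def by blast
    have "(\<lambda>i. x i + y i) = cw m L M N (\<lambda>i. \<alpha> i + \<alpha>' i) (\<lambda>i. \<beta> i + \<beta>' i) (\<lambda>i. \<gamma> i + \<gamma>' i)"
      using x(1) y(1) cw_add by simp
    then show ?thesis unfolding code_def using vecs_add x y by blast
  qed
  show "scal a x \<in> code m L M N" if "x \<in> code m L M N" for a x
  proof (cases "a = 0")
    case True
    then have "scal a x = zero_word" unfolding scal_def zero_word_def by simp
    then show ?thesis using zero_in_code by simp
  next
    case False
    then have "scal a x = x" unfolding scal_def by simp
    then show ?thesis using that by simp
  qed
qed

lemma sumv_sing_sum: "(\<lambda>t. \<Sum>k\<in>K. sumv {k} t) = sumv K"
proof
  fix t show "(\<Sum>k\<in>K. sumv {k} t) = sumv K t" by (cases "t \<in> D2star m L M N") (simp_all add: sumv_def)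
qed

lemma dim: "has_dim (code m L M N) sz"
proof -
  define g where "g k = sumv {k}" for k
  define B where "B = g ` J"
  have injg: "inj_on g J"
  proof (rule inj_onI)
    fix k k' assume kk: "k \<in> J" "k' \<in> J" "g k = g k'"
    have "{k} = {k'}" by (rule inj_onD[OF sumv_inj]) (use kk in \<open>auto simp: g_def\<close>)
    then show "k = k'" by simp
  qed
  have sub: "\<exists>K. K \<subseteq> J \<and> S = g ` K" if "S \<subseteq> B" for S
    using that unfolding B_def by (simp add: subset_image_iff)
  have sumS: "(\<lambda>i. \<Sum>b\<in>g ` K. b i) = sumv K" if "K \<subseteq> J" for K
  proof -
    have "inj_on g K" using injg that inj_on_subset by blast
    then have "(\<lambda>i. \<Sum>b\<in>g ` K. b i) = (\<lambda>i. \<Sum>k\<in>K. g k i)" by (simp add: sum.reindex)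
    then show ?thesis using sumv_sing_sum unfolding g_def by simp
  qed
  have span: "bin_span B = code m L M N"
  proof
    show "bin_span B \<subseteq> code m L M N"
    proof
      fix c assume "c \<in> bin_span B"
      then obtain S where S: "S \<subseteq> B" "c = (\<lambda>i. \<Sum>b\<in>S. b i)" unfolding bin_span_def by blast
      then obtain K where K: "K \<subseteq> J" "S = g ` K" using sub by blast
      have "c = sumv K" using S(2) K(2) sumS[OF K(1)] by simp
      then show "c \<in> code m L M N" using K(1) unfolding code_eq by blast
    qed
    show "code m L M N \<subseteq> bin_span B"
    proof
      fix c assume "c \<in> code m L M N"
      then obtain K where K: "K \<subseteq> J" "c = sumv K" unfolding code_eq by blast
      have gK: "g ` K \<subseteq> B" using K(1) unfolding B_def by auto
      have fgK: "finite (g ` K)" using finite_subset[OF K(1) finJ] by simp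
      have "c = (\<lambda>i. \<Sum>b\<in>g ` K. b i)" using sumS[OF K(1)] K(2) by simp
      then show "c \<in> bin_span B" unfolding bin_span_def using gK fgK by blast
    qed
  qed
  have indep: "bin_indep B"
    unfolding bin_indep_def
  proof (intro allI impI)
    fix S assume S: "S \<subseteq> B \<and> finite S \<and> S \<noteq> {}"
    then have SB: "S \<subseteq> B" by blast
    obtain K where K: "K \<subseteq> J" "S = g ` K" using sub[OF SB] by blast
    have "K \<noteq> {}" using S K(2) by blast
    then obtain k0 where k0: "k0 \<in> K" by blast
    have k0J: "k0 \<in> J" using k0 K(1) by blast
    have one: "sumv K (ek k0) = 1" using sumv_ek[OF K(1) k0J] k0 by simp
    have "sumv K \<noteq> zero_word"
    proof
      assume "sumv K = zero_word"
      then have "sumv K (ek k0) = 0" by (simp add: zero_word_def)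
      with one show False by simp
    qed
    then show "(\<lambda>i. \<Sum>b\<in>S. b i) \<noteq> zero_word" using sumS[OF K(1)] K(2) by simp
  qed
  have "B \<subseteq> code m L M N" unfolding B_def g_def code_eq by auto
  moreover have "card B = sz" unfolding B_def using card_image[OF injg] card_J by simp
  moreover have "finite B" unfolding B_def using finJ by simp
  ultimately show ?thesis unfolding has_dim_def using span indep by (intro exI[of _ B]) simp
qed

lemma nonzero_exists: "code m L M N - {zero_word} \<noteq> {}"
proof -
  obtain j where "j \<in> L" using Lne by blast
  then have J1: "{(0, j)} \<subseteq> J" unfolding J_def by auto
  have w: "wt (sumv {(0,j)}) = 2 ^ (sz - 1)" by (rule wt_sumv[OF J1]) simp
  have c: "sumv {(0,j)} \<in> code m L M N" unfolding code_eq using J1 by blast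
  have "sumv {(0,j)} \<noteq> zero_word"
  proof
    assume "sumv {(0,j)} = zero_word"
    then have "wt (sumv {(0,j)}) = 0" using wt_zero by simp
    then show False using w pow_ne0 by simp
  qed
  then show ?thesis using c by blast
qed

lemma vanish_iff: "Kof \<alpha> \<beta> \<gamma> = {} \<longleftrightarrow> (\<forall>j\<in>L. \<alpha> j = 0) \<and> (\<forall>j\<in>N. \<beta> j = 0) \<and> (\<forall>j\<in>M. \<gamma> j = 0)"
  unfolding Kof_def by blast

lemma wt_cw: "wt (cw m L M N \<alpha> \<beta> \<gamma>) =
  (if (\<forall>j\<in>L. \<alpha> j = 0) \<and> (\<forall>j\<in>N. \<beta> j = 0) \<and> (\<forall>j\<in>M. \<gamma> j = 0) then 0 else 2 ^ (sz - 1))"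
proof (cases "Kof \<alpha> \<beta> \<gamma> = {}")
  case True
  have w: "wt (cw m L M N \<alpha> \<beta> \<gamma>) = 0" using True by (simp add: cw_eq sumv_empty wt_zero)
  have "(\<forall>j\<in>L. \<alpha> j = 0) \<and> (\<forall>j\<in>N. \<beta> j = 0) \<and> (\<forall>j\<in>M. \<gamma> j = 0)" using True vanish_iff by blast
  then show ?thesis using w by simp
next
  case False
  have "wt (cw m L M N \<alpha> \<beta> \<gamma>) = 2 ^ (sz - 1)" unfolding cw_eq by (rule wt_sumv[OF Kof_J False])
  then show ?thesis using False vanish_iff by simp
qed

lemma card_V: "A \<subseteq> {1..m} \<Longrightarrow> card {v \<in> vecs m. \<forall>i\<in>A. v i = 0} = 2 ^ (m - card A)"
proof -
  assume A: "A \<subseteq> {1..m}"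
  have "{v \<in> vecs m. \<forall>i\<in>A. v i = 0} = {v. (\<forall>i. i \<notin> {1..m} \<longrightarrow> v i = 0) \<and> (\<forall>i\<in>A. v i = 0)}"
    unfolding vecs_def by blast
  then show ?thesis using card_vanish[OF finite_atLeastAtMost A] by simp
qed

lemma card_vecs: "card (vecs m) = 2 ^ m"
  using card_V[of "{}"] by simp

lemma fin_V: "finite {v \<in> vecs m. \<forall>i\<in>A. v i = 0}"
  using card_V[of "{}"] card_ge_0_finite[of "vecs m"] by (simp add: card_vecs)

lemma Z0_set: "{(\<alpha>, \<beta>, \<gamma>). \<alpha> \<in> vecs m \<and> \<beta> \<in> vecs m \<and> \<gamma> \<in> vecs m \<and> wt (cw m L M N \<alpha> \<beta> \<gamma>) = 0}
  = {v \<in> vecs m. \<forall>i\<in>L. v i = 0} \<times> {v \<in> vecs m. \<forall>i\<in>N. v i = 0} \<times> {v \<in> vecs m. \<forall>i\<in>M. v i = 0}"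
  using pow_ne0 by (auto simp: wt_cw split: if_splits)

lemma Z1_set: "{(\<alpha>, \<beta>, \<gamma>). \<alpha> \<in> vecs m \<and> \<beta> \<in> vecs m \<and> \<gamma> \<in> vecs m \<and> wt (cw m L M N \<alpha> \<beta> \<gamma>) = 2 ^ (sz - 1)}
  = (vecs m \<times> vecs m \<times> vecs m) -
    ({v \<in> vecs m. \<forall>i\<in>L. v i = 0} \<times> {v \<in> vecs m. \<forall>i\<in>N. v i = 0} \<times> {v \<in> vecs m. \<forall>i\<in>M. v i = 0})"
  using pow_ne0 by (auto simp: wt_cw split: if_splits)

lemma Zcount0: "Zcount m L M N 0 = 2 ^ (m - card L) * 2 ^ (m - card N) * 2 ^ (m - card M)"
  unfolding Zcount_def Z0_set card_cartesian_product card_V[OF L] card_V[OF M] card_V[OF N] by simp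

lemma Zcount1: "Zcount m L M N (2 ^ (sz - 1)) = 2 ^ m * 2 ^ m * 2 ^ m - 2 ^ (m - card L) * 2 ^ (m - card N) * 2 ^ (m - card M)"
proof -
  have fin: "finite (vecs m \<times> vecs m \<times> vecs m)"
    using card_ge_0_finite[of "vecs m"] by (simp add: card_vecs)
  have sub: "{v \<in> vecs m. \<forall>i\<in>L. v i = 0} \<times> {v \<in> vecs m. \<forall>i\<in>N. v i = 0} \<times> {v \<in> vecs m. \<forall>i\<in>M. v i = 0}
    \<subseteq> vecs m \<times> vecs m \<times> vecs m" by blast
  show ?thesis unfolding Zcount_def Z1_set card_Diff_subset[OF finite_subset[OF sub fin] sub]
    card_cartesian_product card_V[OF L] card_V[OF M] card_V[OF N] card_vecs by simp
qed

end



lemma griesmer_simplex: "griesmer (2 ^ s - 1) s (2 ^ (s - 1))"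
  unfolding griesmer_def
proof -
  have "(\<Sum>i<s. nat \<lceil>real (2 ^ (s - 1)) / 2 ^ i\<rceil>) = (\<Sum>i<s. 2 ^ (s - Suc i))"
  proof (rule sum.cong)
    fix i assume "i \<in> {..<s}"
    then have i: "i < s" by simp
    have "(2::real) ^ (s - 1) = 2 ^ (s - Suc i) * 2 ^ i"
      using i by (simp add: power_add[symmetric])
    then have "real (2 ^ (s - 1)) / 2 ^ i = real (2 ^ (s - Suc i))" by simp
    then show "nat \<lceil>real (2 ^ (s - 1)) / 2 ^ i\<rceil> = 2 ^ (s - Suc i)"
      by (metis ceiling_of_nat nat_int)
  qed simp
  also have "\<dots> = (\<Sum>i<s. 2 ^ i)" by (rule sum.nat_diff_reindex)
  also have "\<dots> = 2 ^ s - 1" using mask_eq_sum_exp[where 'a=nat, of s] by (simp add: lessThan_def)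
  finally show "(\<Sum>i<s. nat \<lceil>real (2 ^ (s - 1)) / 2 ^ i\<rceil>) = 2 ^ s - 1" .
qed

theorem mainTheorem8:
  fixes m :: nat and L M N :: "nat set"
  assumes "L \<subseteq> {1..m}" "M \<subseteq> {1..m}" "N \<subseteq> {1..m}"
    and "L \<noteq> {}" "M \<noteq> {}" "N \<noteq> {}"
  defines "s \<equiv> card L + card M + card N"
  shows "is_nkd_code (D2star m L M N) (code m L M N) (2 ^ s - 1) s (2 ^ (s - 1))
    \<and> one_weight (code m L M N)
    \<and> card {c \<in> code m L M N. wt c = 0} = 1
    \<and> card {c \<in> code m L M N. wt c = 2 ^ (s - 1)} = 2 ^ s - 1
    \<and> minimal_code (code m L M N)
    \<and> griesmer (2 ^ s - 1) s (2 ^ (s - 1))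
    \<and> distance_optimal (2 ^ s - 1) s (2 ^ (s - 1))
    \<and> Zcount m L M N 0 = 2 ^ (3 * m - s)
    \<and> Zcount m L M N (2 ^ (s - 1)) = 2 ^ (3 * m - s) * (2 ^ s - 1)"
proof -
  interpret ctx m L M N using assms(1-6) by unfold_locales
  have s: "s = sz" by (simp add: s_def)
  have s1: "1 \<le> s" using sz_pos s by simp
  have z2: "(zero_word, zero_word, zero_word) \<in> D2 m L M N"
    unfolding D2_eq using zero_Delta by blast
  have cardD: "card (D2star m L M N) = 2 ^ s - 1"
    unfolding D2star_def using card_Diff_singleton[OF z2] card_D2 s by simp
  have finD: "finite (D2star m L M N)" unfolding D2star_def using fin_D2 by simp
  have nz: "\<And>c. c \<in> code m L M N - {zero_word} \<Longrightarrow> wt c = 2 ^ (s - 1)"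
    using code_nz s by blast
  have img: "wt ` (code m L M N - {zero_word}) = {2 ^ (s - 1)}"
  proof -
    obtain c0 where c0: "c0 \<in> code m L M N - {zero_word}" using nonzero_exists by blast
    have "wt ` (code m L M N - {zero_word}) \<subseteq> {2 ^ (s - 1)}" using nz by blast
    moreover have "2 ^ (s - 1) \<in> wt ` (code m L M N - {zero_word})" using c0 nz[OF c0] by (metis image_eqI)
    ultimately show ?thesis by blast
  qed
  have md: "min_dist (code m L M N) = 2 ^ (s - 1)"
    unfolding min_dist_def img by simp
  have P1: "is_nkd_code (D2star m L M N) (code m L M N) (2 ^ s - 1) s (2 ^ (s - 1))"
    unfolding is_nkd_code_def using finD cardD lin dim s nonzero_exists md by simp
  have P2: "one_weight (code m L M N)"
    unfolding one_weight_def using nz by blast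
  have P3: "card {c \<in> code m L M N. wt c = 0} = 1"
  proof -
    have "{c \<in> code m L M N. wt c = 0} = {zero_word}"
      using zero_in_code wt_zero nz pow_ne0 s by fastforce
    then show ?thesis by simp
  qed
  have P4: "card {c \<in> code m L M N. wt c = 2 ^ (s - 1)} = 2 ^ s - 1"
  proof -
    have "{c \<in> code m L M N. wt c = 2 ^ (s - 1)} = code m L M N - {zero_word}"
    proof -
      have wz: "wt (zero_word :: triple \<Rightarrow> bit) \<noteq> 2 ^ (s - 1)"
        by (simp only: wt_zero) simp
      show ?thesis
      proof (rule set_eqI)
        fix c
        show "c \<in> {c \<in> code m L M N. wt c = 2 ^ (s - 1)} \<longleftrightarrow> c \<in> code m L M N - {zero_word}"
          using nz[of c] wz by auto
      qed
    qed
    then show ?thesis using card_Diff_singleton[OF zero_in_code] card_code s by simp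
  qed
  have P5: "minimal_code (code m L M N)"
    unfolding minimal_code_def
  proof (intro ballI impI)
    fix c c' assume c: "c \<in> code m L M N - {zero_word}" and c': "c' \<in> code m L M N - {zero_word}"
      and sub: "supp c' \<subseteq> supp c"
    have "c \<in> words (D2star m L M N)" using c code_words by blast
    then have "supp c \<subseteq> D2star m L M N" unfolding words_def supp_def by blast
    then have fs: "finite (supp c)" using finite_subset finD by blast
    have "card (supp c') = card (supp c)" using nz[OF c] nz[OF c'] unfolding wt_def by simp
    then have eqs: "supp c' = supp c" using card_subset_eq[OF fs sub] by simp
    have "c' = c"
    proof
      fix t
      have "(c' t \<noteq> 0) = (c t \<noteq> 0)" using eqs unfolding supp_def by blast
      then show "c' t = c t" using bit_cases'[of "c t"] bit_cases'[of "c' t"] by auto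
    qed
    then show "\<exists>a. c' = scal a c" by (intro exI[of _ 1]) (simp add: scal_def)
  qed
  have P6: "griesmer (2 ^ s - 1) s (2 ^ (s - 1))" by (rule griesmer_simplex)
  have P7: "distance_optimal (2 ^ s - 1) s (2 ^ (s - 1))"
    unfolding distance_optimal_def using no_better_code[OF s1] by blast
  have cL: "card L \<le> m" using card_mono[OF finite_atLeastAtMost assms(1)] by simp
  have cM: "card M \<le> m" using card_mono[OF finite_atLeastAtMost assms(2)] by simp
  have cN: "card N \<le> m" using card_mono[OF finite_atLeastAtMost assms(3)] by simp
  have pw: "(2::nat) ^ (m - card L) * 2 ^ (m - card N) * 2 ^ (m - card M) = 2 ^ (3 * m - s)"
  proof -
    have "(m - card L) + (m - card N) + (m - card M) = 3 * m - s" using cL cM cN s_def by simp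
    then show ?thesis by (metis power_add)
  qed
  have P8: "Zcount m L M N 0 = 2 ^ (3 * m - s)" using Zcount0 pw by simp
  have P9: "Zcount m L M N (2 ^ (s - 1)) = 2 ^ (3 * m - s) * (2 ^ s - 1)"
  proof -
    have e: "(2::nat) ^ m * 2 ^ m * 2 ^ m = 2 ^ (3 * m - s) * 2 ^ s"
    proof -
      have "3 * m - s + s = m + m + m" using cL cM cN s_def by simp
      then show ?thesis by (metis power_add)
    qed
    have "Zcount m L M N (2 ^ (s - 1)) = 2 ^ (3 * m - s) * 2 ^ s - 2 ^ (3 * m - s)"
      using Zcount1 pw e s by simp
    also have "\<dots> = 2 ^ (3 * m - s) * (2 ^ s - 1)" by (simp add: diff_mult_distrib2)
    finally show ?thesis .
  qed
  show ?thesis using P1 P2 P3 P4 P5 P6 P7 P8 P9 by blast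
qed

end
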